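(* Let $\mathcal{A}=\mathcal{A}(R,\boldsymbol{\sigma},\boldsymbol{t})$ and $\mathcal{A}'=\mathcal{A}(R,\boldsymbol{\sigma},\boldsymbol{t}')$ be two twisted generalized Weyl algebras of rank two (with $t_1,t_2$ regular in $R$ and satisfying the consistency equation) such that $t_i'=s_it_i$ for $i=1,2$, where $s_1,s_2$ are central invertible elements of $R$ satisfying $\sigma_2^{1/2}(s_1)\,\sigma_1^{1/2}(s_2)=\sigma_2^{-1/2}(s_1)\,\sigma_1^{-1/2}(s_2)$. Then $\mathcal{A}\simeq\mathcal{A}'$ as $\mathbb{Z}^2$-graded $R$-rings.
   Context: Let $\Bbbk$ be a field, $R$ a unital $\Bbbk$-algebra, $\sigma_1^{1/2},\sigma_2^{1/2}$ commuting automorphisms of $R$ ($\sigma_i=(\sigma_i^{1/2})^2$), $t_1,t_2\in Z(R)$. The TGWC $\tilde{\mathcal{A}}(R,\boldsymbol{\sigma},\boldsymbol{t})$ is obtained from $R$ by adjoining $X_1^\pm,X_2^\pm$ with relations $X_i^\pm r=\sigma_i^{\pm1}(r)X_i^\pm$, $X_i^\pm X_i^\mp=\sigma_i^{\pm1/2}(t_i)$, $[X_1^\pm,X_2^\mp]=0$, graded by $\deg r=0$, $\deg X_i^\pm=\pm\mathbf{e}_i$. The TGWA is $\tilde{\mathcal{A}}$ modulo the sum of all graded ideals meeting the degree-zero part trivially. Consistency equation (rank two): $\sigma_2^{1/2}(t_1)\sigma_1^{1/2}(t_2)=\sigma_2^{-1/2}(t_1)\sigma_1^{-1/2}(t_2)$;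 under it $R$ is identified with the degree-zero component. *)

theory Defs
  imports "HOL-Algebra.QuotRing"
begin

text \<open>Generators X_1^+, X_1^-, X_2^+, X_2^- of a rank two TGWC.\<close>
datatype gen = P1 | M1 | P2 | M2

definition ring_aut :: "('a::ring_1 \<Rightarrow> 'a) \<Rightarrow> bool" where
  "ring_aut f \<longleftrightarrow> bij f \<and> (\<forall>x y. f (x + y) = f x + f y) \<and>
     (\<forall>x y. f (x * y) = f x * f y) \<and> f 1 = 1"

definition k_algebra_map :: "('k::field \<Rightarrow> 'a::ring_1) \<Rightarrow> bool" where
  "k_algebra_map phi \<longleftrightarrow> (\<forall>x y. phi (x + y) = phi x + phi y) \<and>
     (\<forall>x y. phi (x * y) = phi x * phi y) \<and> phi 1 = 1 \<and>
     (\<forall>c r. phi c * r = r * phi c)"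

definition central :: "'a::ring_1 \<Rightarrow> bool" where
  "central z \<longleftrightarrow> (\<forall>r. z * r = r * z)"

definition regular_elem :: "'a::ring_1 \<Rightarrow> bool" where
  "regular_elem z \<longleftrightarrow> (\<forall>r. z * r = 0 \<longrightarrow> r = 0) \<and> (\<forall>r. r * z = 0 \<longrightarrow> r = 0)"

definition invertible_elem :: "'a::ring_1 \<Rightarrow> bool" where
  "invertible_elem z \<longleftrightarrow> (\<exists>y. z * y = 1 \<and> y * z = 1)"

text \<open>Action of a generator: X_i^+ acts by sigma_i = (sigma_i^{1/2})^2, X_i^- by sigma_i^{-1}.
  sh1, sh2 are the square roots sigma_1^{1/2}, sigma_2^{1/2}.\<close>
fun gen_aut :: "('a \<Rightarrow> 'a) \<Rightarrow> ('a \<Rightarrow> 'a) \<Rightarrow> gen \<Rightarrow> 'a \<Rightarrow> 'a" where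
  "gen_aut sh1 sh2 P1 = sh1 \<circ> sh1"
| "gen_aut sh1 sh2 M1 = Hilbert_Choice.inv sh1 \<circ> Hilbert_Choice.inv sh1"
| "gen_aut sh1 sh2 P2 = sh2 \<circ> sh2"
| "gen_aut sh1 sh2 M2 = Hilbert_Choice.inv sh2 \<circ> Hilbert_Choice.inv sh2"

text \<open>For a word w = a_1...a_n, X_w r = word_aut w r X_w.\<close>
fun word_aut :: "('a \<Rightarrow> 'a) \<Rightarrow> ('a \<Rightarrow> 'a) \<Rightarrow> gen list \<Rightarrow> 'a \<Rightarrow> 'a" where
  "word_aut sh1 sh2 [] = id"
| "word_aut sh1 sh2 (a # w) = gen_aut sh1 sh2 a \<circ> word_aut sh1 sh2 w"

fun gen_deg :: "gen \<Rightarrow> int \<times> int" where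
  "gen_deg P1 = (1, 0)" | "gen_deg M1 = (-1, 0)" | "gen_deg P2 = (0, 1)" | "gen_deg M2 = (0, -1)"

definition word_deg :: "gen list \<Rightarrow> int \<times> int" where
  "word_deg w = (\<Sum>a\<leftarrow>w. fst (gen_deg a), \<Sum>a\<leftarrow>w. snd (gen_deg a))"

text \<open>Elements: finitely supported functions from words to R, i.e. sums of r_w X_w.
  This is the R-ring generated by R and the X's subject only to X r = sigma(r) X.\<close>
definition skew_mult :: "('a::ring_1 \<Rightarrow> 'a) \<Rightarrow> ('a \<Rightarrow> 'a) \<Rightarrow>
    (gen list \<Rightarrow> 'a) \<Rightarrow> (gen list \<Rightarrow> 'a) \<Rightarrow> gen list \<Rightarrow> 'a" where
  "skew_mult sh1 sh2 f g w =
     (\<Sum>n\<in>{0..length w}. f (take n w) * word_aut sh1 sh2 (take n w) (g (drop n w)))"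

definition free_skew :: "('a::ring_1 \<Rightarrow> 'a) \<Rightarrow> ('a \<Rightarrow> 'a) \<Rightarrow> (gen list \<Rightarrow> 'a) ring" where
  "free_skew sh1 sh2 =
    \<lparr>carrier = {f. finite {w. f w \<noteq> 0}},
     mult = skew_mult sh1 sh2,
     one = (\<lambda>w. if w = [] then 1 else 0),
     zero = (\<lambda>w. 0),
     add = (\<lambda>f g w. f w + g w)\<rparr>"

definition emb :: "'a::ring_1 \<Rightarrow> gen list \<Rightarrow> 'a" where
  "emb r = (\<lambda>w. if w = [] then r else 0)"

definition Xg :: "gen \<Rightarrow> gen list \<Rightarrow> 'a::ring_1" where
  "Xg a = (\<lambda>w. if w = [a] then 1 else 0)"

definition free_comp :: "('a::ring_1 \<Rightarrow> 'a) \<Rightarrow> ('a \<Rightarrow> 'a) \<Rightarrow> int \<times> int \<Rightarrow> (gen list \<Rightarrow> 'a) set" where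
  "free_comp sh1 sh2 d = {f \<in> carrier (free_skew sh1 sh2). \<forall>w. f w \<noteq> 0 \<longrightarrow> word_deg w = d}"

definition tgwc_rels :: "('a::ring_1 \<Rightarrow> 'a) \<Rightarrow> ('a \<Rightarrow> 'a) \<Rightarrow> 'a \<Rightarrow> 'a \<Rightarrow> (gen list \<Rightarrow> 'a) set" where
  "tgwc_rels sh1 sh2 t1 t2 = (let F = free_skew sh1 sh2 in
     {\<lambda>w. (Xg P1 \<otimes>\<^bsub>F\<^esub> Xg M1) w - emb (sh1 t1) w,
      \<lambda>w. (Xg M1 \<otimes>\<^bsub>F\<^esub> Xg P1) w - emb (Hilbert_Choice.inv sh1 t1) w,
      \<lambda>w. (Xg P2 \<otimes>\<^bsub>F\<^esub> Xg M2) w - emb (sh2 t2) w,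
      \<lambda>w. (Xg M2 \<otimes>\<^bsub>F\<^esub> Xg P2) w - emb (Hilbert_Choice.inv sh2 t2) w,
      \<lambda>w. (Xg P1 \<otimes>\<^bsub>F\<^esub> Xg M2) w - (Xg M2 \<otimes>\<^bsub>F\<^esub> Xg P1) w,
      \<lambda>w. (Xg M1 \<otimes>\<^bsub>F\<^esub> Xg P2) w - (Xg P2 \<otimes>\<^bsub>F\<^esub> Xg M1) w})"

definition tgwc_ideal where
  "tgwc_ideal sh1 sh2 t1 t2 = genideal (free_skew sh1 sh2) (tgwc_rels sh1 sh2 t1 t2)"

definition tgwc :: "('a::ring_1 \<Rightarrow> 'a) \<Rightarrow> ('a \<Rightarrow> 'a) \<Rightarrow> 'a \<Rightarrow> 'a \<Rightarrow> (gen list \<Rightarrow> 'a) set ring" where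
  "tgwc sh1 sh2 t1 t2 = free_skew sh1 sh2 Quot tgwc_ideal sh1 sh2 t1 t2"

definition tgwc_proj where
  "tgwc_proj sh1 sh2 t1 t2 f = tgwc_ideal sh1 sh2 t1 t2 +>\<^bsub>free_skew sh1 sh2\<^esub> f"

definition tgwc_comp where
  "tgwc_comp sh1 sh2 t1 t2 d = tgwc_proj sh1 sh2 t1 t2 ` free_comp sh1 sh2 d"

definition tgwc_graded_ideal where
  "tgwc_graded_ideal sh1 sh2 t1 t2 I \<longleftrightarrow> ideal I (tgwc sh1 sh2 t1 t2) \<and>
     (\<forall>x\<in>I. \<exists>D y. finite D \<and> (\<forall>d\<in>D. y d \<in> I \<inter> tgwc_comp sh1 sh2 t1 t2 d) \<and>
         x = finsum (tgwc sh1 sh2 t1 t2) y D)"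

definition tgwa_ideal where
  "tgwa_ideal sh1 sh2 t1 t2 = genideal (tgwc sh1 sh2 t1 t2)
     (\<Union>{I. tgwc_graded_ideal sh1 sh2 t1 t2 I \<and>
           I \<inter> tgwc_comp sh1 sh2 t1 t2 (0, 0) = {\<zero>\<^bsub>tgwc sh1 sh2 t1 t2\<^esub>}})"

definition tgwa :: "('a::ring_1 \<Rightarrow> 'a) \<Rightarrow> ('a \<Rightarrow> 'a) \<Rightarrow> 'a \<Rightarrow> 'a \<Rightarrow> (gen list \<Rightarrow> 'a) set set ring" where
  "tgwa sh1 sh2 t1 t2 = tgwc sh1 sh2 t1 t2 Quot tgwa_ideal sh1 sh2 t1 t2"

definition tgwa_proj where
  "tgwa_proj sh1 sh2 t1 t2 f =
     tgwa_ideal sh1 sh2 t1 t2 +>\<^bsub>tgwc sh1 sh2 t1 t2\<^esub> tgwc_proj sh1 sh2 t1 t2 f"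

definition tgwa_comp where
  "tgwa_comp sh1 sh2 t1 t2 d = tgwa_proj sh1 sh2 t1 t2 ` free_comp sh1 sh2 d"

definition tgwa_emb where
  "tgwa_emb sh1 sh2 t1 t2 r = tgwa_proj sh1 sh2 t1 t2 (emb r)"

definition graded_R_ring_iso where
  "graded_R_ring_iso sh1 sh2 t1 t2 t1' t2' \<phi> \<longleftrightarrow>
     \<phi> \<in> ring_iso (tgwa sh1 sh2 t1 t2) (tgwa sh1 sh2 t1' t2') \<and>
     (\<forall>r. \<phi> (tgwa_emb sh1 sh2 t1 t2 r) = tgwa_emb sh1 sh2 t1' t2' r) \<and>
     (\<forall>d. \<phi> ` tgwa_comp sh1 sh2 t1 t2 d = tgwa_comp sh1 sh2 t1' t2' d)"

end

theory Submission
  imports Defs "HOL-Algebra.UnivPoly"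
begin

definition siso :: "('a \<Rightarrow> 'b) \<Rightarrow> 'a ring \<Rightarrow> 'b ring \<Rightarrow> bool" where
  "siso h R S \<longleftrightarrow> bij h \<and> h ` carrier R = carrier S \<and>
     (\<forall>x y. h (x \<otimes>\<^bsub>R\<^esub> y) = h x \<otimes>\<^bsub>S\<^esub> h y) \<and>
     (\<forall>x y. h (x \<oplus>\<^bsub>R\<^esub> y) = h x \<oplus>\<^bsub>S\<^esub> h y) \<and>
     h \<one>\<^bsub>R\<^esub> = \<one>\<^bsub>S\<^esub> \<and> h \<zero>\<^bsub>R\<^esub> = \<zero>\<^bsub>S\<^esub>"

lemma siso_D: assumes "siso h R S"
  shows siso_bij: "bij h" and siso_car: "h ` carrier R = carrier S"
    and siso_m: "\<And>x y. h (x \<otimes>\<^bsub>R\<^esub> y) = h x \<otimes>\<^bsub>S\<^esub> h y"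
    and siso_a: "\<And>x y. h (x \<oplus>\<^bsub>R\<^esub> y) = h x \<oplus>\<^bsub>S\<^esub> h y"
    and siso_1: "h \<one>\<^bsub>R\<^esub> = \<one>\<^bsub>S\<^esub>" and siso_0: "h \<zero>\<^bsub>R\<^esub> = \<zero>\<^bsub>S\<^esub>"
  using assms unfolding siso_def by simp_all

lemma siso_ring_iso: "siso h R S \<Longrightarrow> h \<in> ring_iso R S"
  unfolding siso_def
  by (intro ring_iso_memI) (auto simp: bij_betw_def bij_def intro: inj_on_subset)

lemma siso_inv: assumes "siso h R S" shows "siso (Hilbert_Choice.inv h) S R"
proof -
  have b: "bij h" and car: "h ` carrier R = carrier S"
    and hm: "\<And>x y. h (x \<otimes>\<^bsub>R\<^esub> y) = h x \<otimes>\<^bsub>S\<^esub> h y"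
    and ha: "\<And>x y. h (x \<oplus>\<^bsub>R\<^esub> y) = h x \<oplus>\<^bsub>S\<^esub> h y"
    and h1: "h \<one>\<^bsub>R\<^esub> = \<one>\<^bsub>S\<^esub>" and h0: "h \<zero>\<^bsub>R\<^esub> = \<zero>\<^bsub>S\<^esub>"
    using assms unfolding siso_def by blast+
  have ih: "\<And>x. Hilbert_Choice.inv h (h x) = x" using b by (simp add: bij_is_inj)
  have hi: "\<And>x. h (Hilbert_Choice.inv h x) = x" using b by (simp add: bij_is_surj surj_f_inv_f)
  have c: "Hilbert_Choice.inv h ` carrier S = carrier R" by (simp add: car[symmetric] image_image ih)
  have m: "\<And>x y. Hilbert_Choice.inv h (x \<otimes>\<^bsub>S\<^esub> y) = Hilbert_Choice.inv h x \<otimes>\<^bsub>R\<^esub> Hilbert_Choice.inv h y"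
  proof -
    fix x y
    have "h (Hilbert_Choice.inv h x \<otimes>\<^bsub>R\<^esub> Hilbert_Choice.inv h y) = x \<otimes>\<^bsub>S\<^esub> y" by (simp add: hm hi)
    then show "Hilbert_Choice.inv h (x \<otimes>\<^bsub>S\<^esub> y) = Hilbert_Choice.inv h x \<otimes>\<^bsub>R\<^esub> Hilbert_Choice.inv h y"
      by (metis ih)
  qed
  have a: "\<And>x y. Hilbert_Choice.inv h (x \<oplus>\<^bsub>S\<^esub> y) = Hilbert_Choice.inv h x \<oplus>\<^bsub>R\<^esub> Hilbert_Choice.inv h y"
  proof -
    fix x y
    have "h (Hilbert_Choice.inv h x \<oplus>\<^bsub>R\<^esub> Hilbert_Choice.inv h y) = x \<oplus>\<^bsub>S\<^esub> y" by (simp add: ha hi)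
    then show "Hilbert_Choice.inv h (x \<oplus>\<^bsub>S\<^esub> y) = Hilbert_Choice.inv h x \<oplus>\<^bsub>R\<^esub> Hilbert_Choice.inv h y"
      by (metis ih)
  qed
  have "Hilbert_Choice.inv h \<one>\<^bsub>S\<^esub> = \<one>\<^bsub>R\<^esub>" by (metis h1 ih)
  moreover have "Hilbert_Choice.inv h \<zero>\<^bsub>S\<^esub> = \<zero>\<^bsub>R\<^esub>" by (metis h0 ih)
  moreover have "bij (Hilbert_Choice.inv h)" using b by (rule bij_imp_bij_inv)
  ultimately show ?thesis unfolding siso_def using c m a by blast
qed

lemma siso_ring: assumes "siso h R S" "ring R" shows "ring S"
proof -
  have "ring (S \<lparr> zero := h \<zero>\<^bsub>R\<^esub> \<rparr>)"
    using ring.ring_iso_imp_img_ring[OF assms(2) siso_ring_iso[OF assms(1)]] .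
  moreover have "h \<zero>\<^bsub>R\<^esub> = \<zero>\<^bsub>S\<^esub>" using siso_D[OF assms(1)] by simp
  ultimately show ?thesis by simp
qed

lemma siso_ideal: assumes "siso h R S" "ideal I R" shows "ideal (h ` I) S"
proof -
  have rR: "ring R" using assms(2) ideal.axioms(2) by blast
  have rS: "ring S" using siso_ring[OF assms(1) rR] .
  have hh: "ring_hom_ring R S h"
    using siso_ring_iso[OF assms(1)] unfolding ring_iso_def
    by (intro ring_hom_ring.intro[OF rR rS] ring_hom_ring_axioms.intro) blast
  interpret ring_hom_ring R S h by (rule hh)
  have sub: "subgroup I (add_monoid R)" using assms(2) additive_subgroup.a_subgroup ideal.axioms(1) by blast
  have Isub: "I \<subseteq> carrier R" using assms(2) ideal.axioms(1) additive_subgroup.a_subset by blast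
  have car: "h ` carrier R = carrier S" using siso_D[OF assms(1)] by simp
  have hm: "\<And>x y. h (x \<otimes>\<^bsub>R\<^esub> y) = h x \<otimes>\<^bsub>S\<^esub> h y" using siso_D[OF assms(1)] by simp
  show ?thesis
  proof (rule idealI[OF rS])
    show "subgroup (h ` I) (add_monoid S)"
      using group_hom.subgroup_img_is_subgroup[OF a_group_hom sub] .
    fix a x assume a: "a \<in> h ` I" and x: "x \<in> carrier S"
    obtain a0 where a0: "a0 \<in> I" "a = h a0" using a by blast
    obtain x0 where x0: "x0 \<in> carrier R" "x = h x0" using x car by blast
    have "x0 \<otimes>\<^bsub>R\<^esub> a0 \<in> I" using ideal.I_l_closed[OF assms(2) a0(1) x0(1)] .
    then have "h (x0 \<otimes>\<^bsub>R\<^esub> a0) \<in> h ` I" by (rule imageI)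
    then show "x \<otimes>\<^bsub>S\<^esub> a \<in> h ` I" by (simp only: hm x0(2) a0(2))
    have "a0 \<otimes>\<^bsub>R\<^esub> x0 \<in> I" using ideal.I_r_closed[OF assms(2) a0(1) x0(1)] .
    then have "h (a0 \<otimes>\<^bsub>R\<^esub> x0) \<in> h ` I" by (rule imageI)
    then show "a \<otimes>\<^bsub>S\<^esub> x \<in> h ` I" by (simp only: hm x0(2) a0(2))
  qed
qed

lemma bij_image_Inter: assumes "bij h" shows "h ` (\<Inter>A) = \<Inter>((image h) ` A)"
proof -
  have "inj h" using assms bij_is_inj by blast
  then have "h ` (\<Inter>A) \<subseteq> \<Inter>((image h) ` A)" by blast
  moreover have "\<Inter>((image h) ` A) \<subseteq> h ` (\<Inter>A)"
  proof
    fix y assume y: "y \<in> \<Inter>((image h) ` A)"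
    obtain x where x: "y = h x" using assms by (auto simp: bij_def surj_def)
    have "x \<in> \<Inter>A" using y x \<open>inj h\<close> by (auto dest: injD)
    then show "y \<in> h ` (\<Inter>A)" using x by blast
  qed
  ultimately show ?thesis by blast
qed

lemma bij_image_set: assumes "bij h" shows "bij (image h)"
proof -
  have ih: "inj h" using assms by (rule bij_is_inj)
  have "inj (image h)" unfolding inj_on_def by (simp add: inj_image_eq_iff[OF ih])
  moreover have "surj (image h)"
  proof (rule surjI)
    fix B show "image h (Hilbert_Choice.inv h ` B) = B"
      using assms by (simp add: image_image bij_is_surj surj_f_inv_f)
  qed
  ultimately show ?thesis by (simp add: bij_def)
qed

lemma siso_genideal: assumes "siso h R S"
  shows "h ` genideal R X = genideal S (h ` X)"
proof -
  have b: "bij h" using siso_D[OF assms] by simp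
  have inv: "siso (Hilbert_Choice.inv h) S R" using siso_inv[OF assms] .
  have hi: "\<And>x. h (Hilbert_Choice.inv h x) = x" using b by (simp add: bij_is_surj surj_f_inv_f)
  have ih: "\<And>x. Hilbert_Choice.inv h (h x) = x" using b by (simp add: bij_is_inj)
  have "(image h) ` {I. ideal I R \<and> X \<subseteq> I} = {I. ideal I S \<and> h ` X \<subseteq> I}"
  proof (intro equalityI subsetI)
    fix J assume "J \<in> (image h) ` {I. ideal I R \<and> X \<subseteq> I}"
    then show "J \<in> {I. ideal I S \<and> h ` X \<subseteq> I}" using siso_ideal[OF assms] by blast
  next
    fix J assume J: "J \<in> {I. ideal I S \<and> h ` X \<subseteq> I}"
    have "ideal (Hilbert_Choice.inv h ` J) R" using siso_ideal[OF inv] J by blast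
    moreover have "X \<subseteq> Hilbert_Choice.inv h ` J"
    proof
      fix x assume "x \<in> X" then have "h x \<in> J" using J by blast
      then show "x \<in> Hilbert_Choice.inv h ` J" using ih by (metis image_eqI)
    qed
    moreover have "J = h ` (Hilbert_Choice.inv h ` J)" using hi by (simp add: image_image)
    ultimately show "J \<in> (image h) ` {I. ideal I R \<and> X \<subseteq> I}" by blast
  qed
  then show ?thesis unfolding genideal_def by (simp add: bij_image_Inter[OF b])
qed

lemma image_a_r_coset: assumes "\<And>x y. h (x \<oplus>\<^bsub>R\<^esub> y) = h x \<oplus>\<^bsub>S\<^esub> h y"
  shows "h ` (I +>\<^bsub>R\<^esub> a) = (h ` I) +>\<^bsub>S\<^esub> h a"
proof
  show "h ` (I +>\<^bsub>R\<^esub> a) \<subseteq> (h ` I) +>\<^bsub>S\<^esub> h a"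
    unfolding a_r_coset_def' using assms by auto
  show "(h ` I) +>\<^bsub>S\<^esub> h a \<subseteq> h ` (I +>\<^bsub>R\<^esub> a)"
  proof
    fix z assume "z \<in> (h ` I) +>\<^bsub>S\<^esub> h a"
    then obtain i where i: "i \<in> I" "z = h i \<oplus>\<^bsub>S\<^esub> h a" unfolding a_r_coset_def' by auto
    then have "z = h (i \<oplus>\<^bsub>R\<^esub> a)" by (simp add: assms)
    then show "z \<in> h ` (I +>\<^bsub>R\<^esub> a)" using i(1) unfolding a_r_coset_def' by blast
  qed
qed

lemma image_set_add: assumes "\<And>x y. h (x \<oplus>\<^bsub>R\<^esub> y) = h x \<oplus>\<^bsub>S\<^esub> h y"
  shows "h ` (A <+>\<^bsub>R\<^esub> B) = (h ` A) <+>\<^bsub>S\<^esub> (h ` B)"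
proof
  show "h ` (A <+>\<^bsub>R\<^esub> B) \<subseteq> (h ` A) <+>\<^bsub>S\<^esub> (h ` B)"
    unfolding set_add_def' using assms by auto
  show "(h ` A) <+>\<^bsub>S\<^esub> (h ` B) \<subseteq> h ` (A <+>\<^bsub>R\<^esub> B)"
  proof
    fix z assume "z \<in> (h ` A) <+>\<^bsub>S\<^esub> (h ` B)"
    then obtain i j where i: "i \<in> A" "j \<in> B" "z = h i \<oplus>\<^bsub>S\<^esub> h j" unfolding set_add_def' by auto
    then have "z = h (i \<oplus>\<^bsub>R\<^esub> j)" by (simp add: assms)
    then show "z \<in> h ` (A <+>\<^bsub>R\<^esub> B)" using i(1,2) unfolding set_add_def' by blast
  qed
qed

lemma siso_coset: assumes "siso h R S" shows "h ` (I +>\<^bsub>R\<^esub> a) = (h ` I) +>\<^bsub>S\<^esub> h a"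
  using image_a_r_coset[where h=h and R=R and S=S, OF siso_a[OF assms]] .

lemma siso_quot: assumes "siso h R S"
  shows "siso (image h) (R Quot I) (S Quot (h ` I))"
proof -
  have b: "bij h" and car: "h ` carrier R = carrier S"
    and hm: "\<And>x y. h (x \<otimes>\<^bsub>R\<^esub> y) = h x \<otimes>\<^bsub>S\<^esub> h y"
    and ha: "\<And>x y. h (x \<oplus>\<^bsub>R\<^esub> y) = h x \<oplus>\<^bsub>S\<^esub> h y"
    and h1: "h \<one>\<^bsub>R\<^esub> = \<one>\<^bsub>S\<^esub>"
    using siso_D[OF assms] by simp+
  note co = image_a_r_coset[where h=h and R=R and S=S, OF ha]
  have "image h ` A_RCOSETS R I = A_RCOSETS S (h ` I)"
  proof
    show "image h ` A_RCOSETS R I \<subseteq> A_RCOSETS S (h ` I)"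
    proof
      fix z assume "z \<in> image h ` A_RCOSETS R I"
      then obtain a where a: "a \<in> carrier R" "z = h ` (I +>\<^bsub>R\<^esub> a)" unfolding A_RCOSETS_def' by auto
      have "h a \<in> carrier S" using a(1) car by blast
      then show "z \<in> A_RCOSETS S (h ` I)" using a(2) co unfolding A_RCOSETS_def' by auto
    qed
    show "A_RCOSETS S (h ` I) \<subseteq> image h ` A_RCOSETS R I"
    proof
      fix z assume "z \<in> A_RCOSETS S (h ` I)"
      then obtain x where x: "x \<in> carrier S" "z = h ` I +>\<^bsub>S\<^esub> x" unfolding A_RCOSETS_def' by auto
      then obtain a where a: "a \<in> carrier R" "x = h a" using car by blast
      then have "z = h ` (I +>\<^bsub>R\<^esub> a)" using x co by simp
      then show "z \<in> image h ` A_RCOSETS R I" using a(1) unfolding A_RCOSETS_def' by blast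
    qed
  qed
  moreover have "\<And>A B. h ` rcoset_mult R I A B = rcoset_mult S (h ` I) (h ` A) (h ` B)"
    unfolding rcoset_mult_def by (auto simp: co hm image_UN)
  moreover have "\<And>A B. h ` (A <+>\<^bsub>R\<^esub> B) = (h ` A) <+>\<^bsub>S\<^esub> (h ` B)"
    using image_set_add[where h=h and R=R and S=S, OF ha] .
  ultimately show ?thesis unfolding siso_def FactRing_def
    using bij_image_set[OF b] co h1 by simp
qed

lemma siso_finsum: assumes "siso h R S" "ring R" "finite D" "y \<in> D \<rightarrow> carrier R"
  shows "h (finsum R y D) = finsum S (h \<circ> y) D"
proof -
  have rS: "ring S" using siso_ring[OF assms(1,2)] .
  have hh: "ring_hom_ring R S h"
    using siso_ring_iso[OF assms(1)] unfolding ring_iso_def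
    by (intro ring_hom_ring.intro[OF assms(2) rS] ring_hom_ring_axioms.intro) blast
  show ?thesis using ring_hom_ring.hom_finsum[OF hh assms(4)] .
qed


definition gr :: "'a ring \<Rightarrow> ('d \<Rightarrow> 'a set) \<Rightarrow> 'a set \<Rightarrow> bool" where
  "gr R C I \<longleftrightarrow> ideal I R \<and>
     (\<forall>x\<in>I. \<exists>D y. finite D \<and> (\<forall>d\<in>D. y d \<in> I \<inter> C d) \<and> x = finsum R y D)"

lemma siso_gr: assumes "siso h R S" "\<And>d. h ` C d = C' d" "gr R C I"
  shows "gr S C' (h ` I)"
proof -
  have id: "ideal I R" using assms(3) gr_def by blast
  have rR: "ring R" using id ideal.axioms(2) by blast
  have Isub: "I \<subseteq> carrier R" using id ideal.axioms(1) additive_subgroup.a_subset by blast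
  have "\<forall>x\<in>h ` I. \<exists>D y. finite D \<and> (\<forall>d\<in>D. y d \<in> h ` I \<inter> C' d) \<and> x = finsum S y D"
  proof
    fix x' assume "x' \<in> h ` I"
    then obtain x where x: "x \<in> I" "x' = h x" by blast
    then obtain D y where Dy: "finite D" "\<forall>d\<in>D. y d \<in> I \<inter> C d" "x = finsum R y D"
      using assms(3) unfolding gr_def by blast
    have yc: "y \<in> D \<rightarrow> carrier R" using Dy(2) Isub by blast
    have "x' = finsum S (h \<circ> y) D" using siso_finsum[OF assms(1) rR Dy(1) yc] x(2) Dy(3) by simp
    moreover have "\<forall>d\<in>D. (h \<circ> y) d \<in> h ` I \<inter> C' d" using Dy(2) assms(2) by auto
    ultimately show "\<exists>D y. finite D \<and> (\<forall>d\<in>D. y d \<in> h ` I \<inter> C' d) \<and> x' = finsum S y D"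
      using Dy(1) by blast
  qed
  then show ?thesis unfolding gr_def using siso_ideal[OF assms(1) id] by blast
qed

lemma siso_zc: assumes "siso h R S" "h ` C = C'" "I \<inter> C = {\<zero>\<^bsub>R\<^esub>}"
  shows "h ` I \<inter> C' = {\<zero>\<^bsub>S\<^esub>}"
proof -
  have "inj h" using siso_bij[OF assms(1)] bij_is_inj by blast
  then have "h ` I \<inter> h ` C = h ` (I \<inter> C)" by (simp add: image_Int)
  then show ?thesis using assms siso_0[OF assms(1)] by simp
qed

lemma siso_family: assumes "siso h R S" "\<And>d. h ` C d = C' d"
  shows "h ` \<Union>{I. gr R C I \<and> I \<inter> C z = {\<zero>\<^bsub>R\<^esub>}} = \<Union>{I. gr S C' I \<and> I \<inter> C' z = {\<zero>\<^bsub>S\<^esub>}}"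
proof -
  have b: "bij h" using siso_bij[OF assms(1)] .
  have inv: "siso (Hilbert_Choice.inv h) S R" using siso_inv[OF assms(1)] .
  have hi: "\<And>x. h (Hilbert_Choice.inv h x) = x" using b by (simp add: bij_is_surj surj_f_inv_f)
  have ih: "\<And>x. Hilbert_Choice.inv h (h x) = x" using b by (simp add: bij_is_inj)
  have C2: "\<And>d. Hilbert_Choice.inv h ` C' d = C d"
    by (simp add: assms(2)[symmetric] image_image ih)
  have "(image h) ` {I. gr R C I \<and> I \<inter> C z = {\<zero>\<^bsub>R\<^esub>}} = {I. gr S C' I \<and> I \<inter> C' z = {\<zero>\<^bsub>S\<^esub>}}"
  proof (intro equalityI subsetI)
    fix J assume "J \<in> (image h) ` {I. gr R C I \<and> I \<inter> C z = {\<zero>\<^bsub>R\<^esub>}}"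
    then obtain I where I: "gr R C I" "I \<inter> C z = {\<zero>\<^bsub>R\<^esub>}" "J = h ` I" by blast
    show "J \<in> {I. gr S C' I \<and> I \<inter> C' z = {\<zero>\<^bsub>S\<^esub>}}"
      using siso_gr[OF assms(1,2) I(1)] siso_zc[OF assms(1) assms(2) I(2)] I(3) by blast
  next
    fix J assume J: "J \<in> {I. gr S C' I \<and> I \<inter> C' z = {\<zero>\<^bsub>S\<^esub>}}"
    have "gr R C (Hilbert_Choice.inv h ` J)" using siso_gr[where C=C' and C'=C, OF inv C2] J by blast
    moreover have "Hilbert_Choice.inv h ` J \<inter> C z = {\<zero>\<^bsub>R\<^esub>}" using siso_zc[OF inv C2] J by blast
    moreover have "J = h ` (Hilbert_Choice.inv h ` J)" using hi by (simp add: image_image)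
    ultimately show "J \<in> (image h) ` {I. gr R C I \<and> I \<inter> C z = {\<zero>\<^bsub>R\<^esub>}}" by blast
  qed
  then show ?thesis by (simp add: image_Union)
qed


section \<open>Ring automorphisms\<close>

lemma ra_add: "ring_aut f \<Longrightarrow> f (x + y) = f x + f y" unfolding ring_aut_def by blast
lemma ra_mult: "ring_aut f \<Longrightarrow> f (x * y) = f x * f y" unfolding ring_aut_def by blast
lemma ra_one: "ring_aut f \<Longrightarrow> f 1 = 1" unfolding ring_aut_def by blast
lemma ra_bij: "ring_aut f \<Longrightarrow> bij f" unfolding ring_aut_def by blast
lemma ra_zero: assumes "ring_aut f" shows "f 0 = 0"
proof -
  have "f (0 + 0) = f 0 + f 0" by (rule ra_add[OF assms])
  then show ?thesis by simp
qed
lemma ra_uminus: assumes "ring_aut f" shows "f (- x) = - f x"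
proof -
  have "f (x + - x) = f x + f (- x)" by (rule ra_add[OF assms])
  then have "0 = f x + f (- x)" using ra_zero[OF assms] by simp
  then have "f (- x) + f x = 0" by (metis add.commute)
  then show ?thesis by (rule minus_unique[symmetric, OF trans[OF add.commute]])
qed
lemma ra_minus: assumes "ring_aut f" shows "f (x - y) = f x - f y"
  using ra_add[OF assms, of x "- y"] ra_uminus[OF assms, of y] by simp

lemma ra_inv_l: "ring_aut f \<Longrightarrow> Hilbert_Choice.inv f (f x) = x"
  by (rule inv_f_f[OF bij_is_inj[OF ra_bij]])
lemma ra_inv_r: "ring_aut f \<Longrightarrow> f (Hilbert_Choice.inv f x) = x"
  by (rule surj_f_inv_f[OF bij_is_surj[OF ra_bij]])

lemma ra_inv: assumes "ring_aut f" shows "ring_aut (Hilbert_Choice.inv f)"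
proof -
  note l = ra_inv_l[OF assms] and r = ra_inv_r[OF assms]
  have "\<And>x y. Hilbert_Choice.inv f (x + y) = Hilbert_Choice.inv f x + Hilbert_Choice.inv f y"
  proof -
    fix x y
    have "f (Hilbert_Choice.inv f x + Hilbert_Choice.inv f y) = x + y" by (simp add: ra_add[OF assms] r)
    then show "Hilbert_Choice.inv f (x + y) = Hilbert_Choice.inv f x + Hilbert_Choice.inv f y" by (metis l)
  qed
  moreover have "\<And>x y. Hilbert_Choice.inv f (x * y) = Hilbert_Choice.inv f x * Hilbert_Choice.inv f y"
  proof -
    fix x y
    have "f (Hilbert_Choice.inv f x * Hilbert_Choice.inv f y) = x * y" by (simp add: ra_mult[OF assms] r)
    then show "Hilbert_Choice.inv f (x * y) = Hilbert_Choice.inv f x * Hilbert_Choice.inv f y" by (metis l)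
  qed
  moreover have "Hilbert_Choice.inv f 1 = 1" by (metis l ra_one[OF assms])
  moreover have "bij (Hilbert_Choice.inv f)" using ra_bij[OF assms] by (rule bij_imp_bij_inv)
  ultimately show ?thesis unfolding ring_aut_def by blast
qed

lemma ra_comp: assumes "ring_aut f" "ring_aut g" shows "ring_aut (f \<circ> g)"
  using assms unfolding ring_aut_def by (auto intro: bij_comp)

lemma ra_id: "ring_aut id" unfolding ring_aut_def by simp

lemma ra_gen: assumes "ring_aut sh1" "ring_aut sh2" shows "ring_aut (gen_aut sh1 sh2 g)"
  by (cases g) (simp_all add: ra_comp ra_inv assms)

lemma ra_word: assumes "ring_aut sh1" "ring_aut sh2" shows "ring_aut (word_aut sh1 sh2 w)"
  by (induction w) (simp_all only: word_aut.simps ra_id ra_comp ra_gen assms)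

lemma word_aut_append: "word_aut sh1 sh2 (u @ v) = word_aut sh1 sh2 u \<circ> word_aut sh1 sh2 v"
  by (induction u) auto

lemma ra_central: assumes "ring_aut f" "central z" shows "central (f z)"
  unfolding central_def
proof
  fix r
  have "f z * r = f z * f (Hilbert_Choice.inv f r)" by (simp add: ra_inv_r[OF assms(1)])
  also have "\<dots> = f (z * Hilbert_Choice.inv f r)" by (simp add: ra_mult[OF assms(1)])
  also have "\<dots> = f (Hilbert_Choice.inv f r * z)" using assms(2) central_def by metis
  also have "\<dots> = r * f z" by (simp add: ra_mult[OF assms(1)] ra_inv_r[OF assms(1)])
  finally show "f z * r = r * f z" .
qed

lemma ra_invertible: assumes "ring_aut f" "invertible_elem z" shows "invertible_elem (f z)"
proof -
  obtain y where y: "z * y = 1" "y * z = 1" using assms(2) invertible_elem_def by blast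
  have "f z * f y = 1" "f y * f z = 1" using y by (simp_all add: ra_mult[OF assms(1),symmetric] ra_one[OF assms(1)])
  then show ?thesis unfolding invertible_elem_def by blast
qed

lemma central_mult: "central a \<Longrightarrow> central b \<Longrightarrow> central (a * b)"
  unfolding central_def by (metis mult.assoc)
lemma invertible_mult: assumes "invertible_elem a" "invertible_elem b" shows "invertible_elem (a * b)"
proof -
  obtain x where x: "a * x = 1" "x * a = 1" using assms(1) invertible_elem_def by blast
  obtain y where y: "b * y = 1" "y * b = 1" using assms(2) invertible_elem_def by blast
  have "a * b * (y * x) = a * (b * y) * x" by (simp add: mult.assoc)
  also have "\<dots> = 1" using x y by simp
  finally have 1: "a * b * (y * x) = 1" .
  have "y * x * (a * b) = y * (x * a) * b" by (simp add: mult.assoc)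
  also have "\<dots> = 1" using x y by simp
  finally have 2: "y * x * (a * b) = 1" .
  show ?thesis unfolding invertible_elem_def using 1 2 by blast
qed
lemma central_one: "central 1" unfolding central_def by simp
lemma invertible_one: "invertible_elem 1" unfolding invertible_elem_def by auto


section \<open>The rescaling automorphism of the free skew ring\<close>

fun kap :: "('a::ring_1 \<Rightarrow> 'a) \<Rightarrow> ('a \<Rightarrow> 'a) \<Rightarrow> (gen \<Rightarrow> 'a) \<Rightarrow> gen list \<Rightarrow> 'a" where
  "kap sh1 sh2 c [] = 1"
| "kap sh1 sh2 c (g # w) = c g * gen_aut sh1 sh2 g (kap sh1 sh2 c w)"

lemma kap_append: assumes "ring_aut sh1" "ring_aut sh2"
  shows "kap sh1 sh2 c (u @ v) = kap sh1 sh2 c u * word_aut sh1 sh2 u (kap sh1 sh2 c v)"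
proof (induction u)
  case Nil then show ?case by simp
next
  case (Cons g u)
  have "kap sh1 sh2 c ((g # u) @ v) = c g * gen_aut sh1 sh2 g (kap sh1 sh2 c u * word_aut sh1 sh2 u (kap sh1 sh2 c v))"
    using Cons by simp
  also have "\<dots> = c g * (gen_aut sh1 sh2 g (kap sh1 sh2 c u) * gen_aut sh1 sh2 g (word_aut sh1 sh2 u (kap sh1 sh2 c v)))"
    by (simp add: ra_mult[OF ra_gen[OF assms]])
  also have "\<dots> = kap sh1 sh2 c (g # u) * word_aut sh1 sh2 (g # u) (kap sh1 sh2 c v)"
    by (simp add: mult.assoc)
  finally show ?case .
qed

lemma kap_cu: assumes "ring_aut sh1" "ring_aut sh2" "\<forall>g. central (c g)" "\<forall>g. invertible_elem (c g)"
  shows "central (kap sh1 sh2 c w) \<and> invertible_elem (kap sh1 sh2 c w)"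
proof (induction w)
  case Nil then show ?case by (simp add: central_one invertible_one)
next
  case (Cons g w)
  then show ?case
    using central_mult[OF spec[OF assms(3)] ra_central[OF ra_gen[OF assms(1,2)]]]
      invertible_mult[OF spec[OF assms(4)] ra_invertible[OF ra_gen[OF assms(1,2)]]] by simp
qed

definition Phi :: "('a::ring_1 \<Rightarrow> 'a) \<Rightarrow> ('a \<Rightarrow> 'a) \<Rightarrow> (gen \<Rightarrow> 'a) \<Rightarrow> (gen list \<Rightarrow> 'a) \<Rightarrow> gen list \<Rightarrow> 'a" where
  "Phi sh1 sh2 c f = (\<lambda>w. f w * kap sh1 sh2 c w)"

definition kinv :: "('a::ring_1 \<Rightarrow> 'a) \<Rightarrow> ('a \<Rightarrow> 'a) \<Rightarrow> (gen \<Rightarrow> 'a) \<Rightarrow> gen list \<Rightarrow> 'a" where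
  "kinv sh1 sh2 c w = (SOME y. kap sh1 sh2 c w * y = 1 \<and> y * kap sh1 sh2 c w = 1)"

lemma central_comm: "central k \<Longrightarrow> k * x = x * k" unfolding central_def by blast

lemma mult_central_swap: assumes "central k" shows "(a * k) * (b * m) = (a * b) * (k * m)"
proof -
  have "(a * k) * (b * m) = a * (k * b) * m" by (simp add: mult.assoc)
  also have "\<dots> = a * (b * k) * m" using central_comm[OF assms] by simp
  also have "\<dots> = (a * b) * (k * m)" by (simp add: mult.assoc)
  finally show ?thesis .
qed

lemma Phi_mult: assumes "ring_aut sh1" "ring_aut sh2" "\<forall>g. central (c g)" "\<forall>g. invertible_elem (c g)"
  shows "skew_mult sh1 sh2 (Phi sh1 sh2 c f) (Phi sh1 sh2 c g) = Phi sh1 sh2 c (skew_mult sh1 sh2 f g)"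
proof
  fix w
  let ?k = "kap sh1 sh2 c"
  have tm: "(f (take n w) * ?k (take n w)) * word_aut sh1 sh2 (take n w) (g (drop n w) * ?k (drop n w))
      = (f (take n w) * word_aut sh1 sh2 (take n w) (g (drop n w))) * ?k w" for n
  proof -
    have "(f (take n w) * ?k (take n w)) * word_aut sh1 sh2 (take n w) (g (drop n w) * ?k (drop n w))
      = (f (take n w) * ?k (take n w)) * (word_aut sh1 sh2 (take n w) (g (drop n w)) * word_aut sh1 sh2 (take n w) (?k (drop n w)))"
      by (simp add: ra_mult[OF ra_word[OF assms(1,2)]])
    also have "\<dots> = (f (take n w) * word_aut sh1 sh2 (take n w) (g (drop n w))) * (?k (take n w) * word_aut sh1 sh2 (take n w) (?k (drop n w)))"
      by (rule mult_central_swap[OF conjunct1[OF kap_cu[OF assms]]])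
    also have "?k (take n w) * word_aut sh1 sh2 (take n w) (?k (drop n w)) = ?k w"
      using kap_append[OF assms(1,2), of c "take n w" "drop n w"] by simp
    finally show ?thesis .
  qed
  show "skew_mult sh1 sh2 (Phi sh1 sh2 c f) (Phi sh1 sh2 c g) w = Phi sh1 sh2 c (skew_mult sh1 sh2 f g) w"
    unfolding skew_mult_def Phi_def by (simp only: tm sum_distrib_right)
qed

lemma kinv_prop: assumes "ring_aut sh1" "ring_aut sh2" "\<forall>g. central (c g)" "\<forall>g. invertible_elem (c g)"
  shows "kap sh1 sh2 c w * kinv sh1 sh2 c w = 1 \<and> kinv sh1 sh2 c w * kap sh1 sh2 c w = 1"
proof -
  obtain y where y: "kap sh1 sh2 c w * y = 1 \<and> y * kap sh1 sh2 c w = 1"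
    using conjunct2[OF kap_cu[OF assms]] unfolding invertible_elem_def by blast
  show ?thesis unfolding kinv_def by (rule someI[where x=y]) (rule y)
qed

lemma siso_Phi: assumes "ring_aut sh1" "ring_aut sh2" "\<forall>g. central (c g)" "\<forall>g. invertible_elem (c g)"
  shows "siso (Phi sh1 sh2 c) (free_skew sh1 sh2) (free_skew sh1 sh2)"
proof -
  let ?P = "Phi sh1 sh2 c"
  let ?Q = "\<lambda>f w. f w * kinv sh1 sh2 c w"
  note ki = kinv_prop[OF assms]
  have PQ: "?P (?Q f) = f" for f
    unfolding Phi_def by (rule ext) (simp add: mult.assoc ki)
  have QP: "?Q (?P f) = f" for f
    unfolding Phi_def by (rule ext) (simp add: mult.assoc ki)
  have "inj ?P" by (rule inj_on_inverseI[where g="?Q"]) (rule QP)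
  moreover have "surj ?P" by (rule surjI[where f="?Q"]) (rule PQ)
  ultimately have bij: "bij ?P" unfolding bij_def by blast
  have supp: "{w. ?P f w \<noteq> 0} = {w. f w \<noteq> 0}" for f
  proof -
    have "?P f w = 0 \<longleftrightarrow> f w = 0" for w
    proof
      assume "?P f w = 0"
      then have "f w * kap sh1 sh2 c w * kinv sh1 sh2 c w = 0" unfolding Phi_def by simp
      then show "f w = 0" by (simp add: mult.assoc ki)
    qed (simp add: Phi_def)
    then show ?thesis by blast
  qed
  have supp2: "{w. ?Q f w \<noteq> 0} = {w. f w \<noteq> 0}" for f
    using supp[of "?Q f"] PQ by simp
  have car: "?P ` carrier (free_skew sh1 sh2) = carrier (free_skew sh1 sh2)"
  proof
    show "?P ` carrier (free_skew sh1 sh2) \<subseteq> carrier (free_skew sh1 sh2)"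
      unfolding free_skew_def using supp by auto
    show "carrier (free_skew sh1 sh2) \<subseteq> ?P ` carrier (free_skew sh1 sh2)"
    proof
      fix f assume "f \<in> carrier (free_skew sh1 sh2)"
      then have Qc: "?Q f \<in> carrier (free_skew sh1 sh2)" unfolding free_skew_def using supp2 by simp
      show "f \<in> ?P ` carrier (free_skew sh1 sh2)" using PQ[of f] Qc by (simp add: image_iff) (metis)
    qed
  qed
  have m: "?P (x \<otimes>\<^bsub>free_skew sh1 sh2\<^esub> y) = ?P x \<otimes>\<^bsub>free_skew sh1 sh2\<^esub> ?P y" for x y
    unfolding free_skew_def using Phi_mult[OF assms, of x y] by simp
  have a: "?P (x \<oplus>\<^bsub>free_skew sh1 sh2\<^esub> y) = ?P x \<oplus>\<^bsub>free_skew sh1 sh2\<^esub> ?P y" for x y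
    unfolding free_skew_def Phi_def by (simp add: distrib_right)
  have o: "?P \<one>\<^bsub>free_skew sh1 sh2\<^esub> = \<one>\<^bsub>free_skew sh1 sh2\<^esub>"
    unfolding free_skew_def Phi_def by (rule ext) simp
  have z: "?P \<zero>\<^bsub>free_skew sh1 sh2\<^esub> = \<zero>\<^bsub>free_skew sh1 sh2\<^esub>"
    unfolding free_skew_def Phi_def by simp
  show ?thesis unfolding siso_def using bij car m a o z by blast
qed


lemma emb_mult: "skew_mult sh1 sh2 (emb c) g = (\<lambda>w. c * g w)"
proof
  fix w
  have "skew_mult sh1 sh2 (emb c) g w =
      emb c (take 0 w) * word_aut sh1 sh2 (take 0 w) (g (drop 0 w)) +
      (\<Sum>n\<in>{Suc 0..length w}. emb c (take n w) * word_aut sh1 sh2 (take n w) (g (drop n w)))"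
    unfolding skew_mult_def by (rule sum.atLeast_Suc_atMost) simp
  also have "(\<Sum>n\<in>{Suc 0..length w}. emb c (take n w) * word_aut sh1 sh2 (take n w) (g (drop n w))) = 0"
    by (rule sum.neutral) (auto simp: emb_def)
  finally show "skew_mult sh1 sh2 (emb c) g w = c * g w" by (simp add: emb_def)
qed

lemma Xg_mult: fixes sh1 sh2 :: "'a::ring_1 \<Rightarrow> 'a" assumes "ring_aut sh1" "ring_aut sh2"
  shows "skew_mult sh1 sh2 (Xg a) (Xg b) = (\<lambda>w. if w = [a, b] then 1 else 0)"
proof
  fix w
  show "skew_mult sh1 sh2 (Xg a) (Xg b) w = (if w = [a, b] then 1 else 0)"
  proof (cases "w = [a, b]")
    case True
    have "skew_mult sh1 sh2 (Xg a) (Xg b) w =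
       (\<Sum>n\<in>{0..Suc (Suc 0)}. Xg a (take n [a,b]) * word_aut sh1 sh2 (take n [a,b]) (Xg b (drop n [a,b])))"
      unfolding skew_mult_def True by simp
    also have "\<dots> = 1" by (simp add: Xg_def ra_one[OF ra_gen[OF assms]])
    finally show ?thesis using True by simp
  next
    case False
    have "skew_mult sh1 sh2 (Xg a) (Xg b) w = 0" unfolding skew_mult_def
    proof (rule sum.neutral, rule ballI)
      fix n assume "n \<in> {0..length w}"
      show "Xg a (take n w) * word_aut sh1 sh2 (take n w) (Xg b (drop n w)) = 0"
      proof (cases "take n w = [a] \<and> drop n w = [b]")
        case True
        then have "w = [a, b]" by (metis append_Cons append_Nil append_take_drop_id)
        then show ?thesis using False by blast
      next
        case f: False
        show ?thesis
        proof (cases "take n w = [a]")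
          case True
          then have x0: "Xg b (drop n w) = (0::'a)" using f by (simp add: Xg_def)
          have "word_aut sh1 sh2 (take n w) (0::'a) = 0" by (rule ra_zero[OF ra_word[OF assms]])
          then show ?thesis using x0 by simp
        qed (simp add: Xg_def)
      qed
    qed
    then show ?thesis using False by simp
  qed
qed

definition rl :: "gen \<Rightarrow> gen \<Rightarrow> 'a::ring_1 \<Rightarrow> gen list \<Rightarrow> 'a" where
  "rl a b x = (\<lambda>w. (if w = [a, b] then 1 else 0) - emb x w)"

definition rc :: "gen \<Rightarrow> gen \<Rightarrow> gen list \<Rightarrow> 'a::ring_1" where
  "rc a b = (\<lambda>w. (if w = [a, b] then 1 else 0) - (if w = [b, a] then 1 else 0))"

lemma rels_eq: assumes "ring_aut sh1" "ring_aut sh2"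
  shows "tgwc_rels sh1 sh2 t1 t2 = {rl P1 M1 (sh1 t1), rl M1 P1 (Hilbert_Choice.inv sh1 t1),
     rl P2 M2 (sh2 t2), rl M2 P2 (Hilbert_Choice.inv sh2 t2), rc P1 M2, rc M1 P2}"
  unfolding tgwc_rels_def Let_def free_skew_def rl_def rc_def
  by (simp add: Xg_mult[OF assms])

lemma scale_ideal: assumes "ideal I (free_skew sh1 sh2)" "g \<in> I"
  shows "(\<lambda>w. k * g w) \<in> I"
proof -
  have "emb k \<in> carrier (free_skew sh1 sh2)"
  proof -
    have "{w. emb k w \<noteq> 0} \<subseteq> {[]}" by (auto simp: emb_def)
    then show ?thesis unfolding free_skew_def by (simp add: finite_subset)
  qed
  then have "emb k \<otimes>\<^bsub>free_skew sh1 sh2\<^esub> g \<in> I" using ideal.I_l_closed[OF assms(1) assms(2)] by blast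
  then show ?thesis by (simp add: free_skew_def emb_mult)
qed

lemma scale_equiv: assumes "ideal I (free_skew sh1 sh2)" "f = (\<lambda>w. k * g w)" "k' * k = 1"
  shows "f \<in> I \<longleftrightarrow> g \<in> I"
proof
  assume "f \<in> I"
  then have "(\<lambda>w. k' * f w) \<in> I" by (rule scale_ideal[OF assms(1)])
  moreover have "(\<lambda>w. k' * f w) = g" using assms(2,3) by (simp add: mult.assoc[symmetric])
  ultimately show "g \<in> I" by simp
next
  assume "g \<in> I"
  then show "f \<in> I" using scale_ideal[OF assms(1)] assms(2) by blast
qed

lemma Phi_rl: assumes "x = kap sh1 sh2 c [a, b] * x'"
  shows "Phi sh1 sh2 c (rl a b x) = (\<lambda>w. kap sh1 sh2 c [a, b] * rl a b x' w)"
  unfolding Phi_def rl_def emb_def using assms by (auto simp: algebra_simps)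

lemma Phi_rc: assumes "kap sh1 sh2 c [a, b] = kap sh1 sh2 c [b, a]" "a \<noteq> b"
  shows "Phi sh1 sh2 c (rc a b) = (\<lambda>w. kap sh1 sh2 c [a, b] * rc a b w)"
  unfolding Phi_def rc_def using assms by (auto simp: algebra_simps)


lemma central_inverse: assumes "central s" "s * y = 1" "y * s = 1" shows "central y"
  unfolding central_def
proof
  fix r
  have "y * r = y * (r * (s * y))" using assms(2) by simp
  also have "\<dots> = y * (s * r) * y" using central_comm[OF assms(1), of r] by (simp add: mult.assoc)
  also have "\<dots> = r * y" using assms(3) by (simp add: mult.assoc[symmetric])
  finally show "y * r = r * y" .
qed

locale tw =
  fixes sh1 sh2 :: "'a::ring_1 \<Rightarrow> 'a" and s1 s2 y1 y2 :: 'a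
  assumes ra1: "ring_aut sh1" and ra2: "ring_aut sh2" and comm: "sh1 \<circ> sh2 = sh2 \<circ> sh1"
    and cs1: "central s1" and cs2: "central s2"
    and y1: "s1 * y1 = 1" "y1 * s1 = 1" and y2: "s2 * y2 = 1" "y2 * s2 = 1"
    and hyp: "sh2 s1 * sh1 s2 = Hilbert_Choice.inv sh2 s1 * Hilbert_Choice.inv sh1 s2"
begin

abbreviation "i1 \<equiv> Hilbert_Choice.inv sh1"
abbreviation "i2 \<equiv> Hilbert_Choice.inv sh2"

lemma ri1: "ring_aut i1" by (rule ra_inv[OF ra1])
lemma ri2: "ring_aut i2" by (rule ra_inv[OF ra2])

lemma cy1: "central y1" by (rule central_inverse[OF cs1 y1])
lemma cy2: "central y2" by (rule central_inverse[OF cs2 y2])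

definition cc :: "gen \<Rightarrow> 'a" where
  "cc g = (case g of P1 \<Rightarrow> sh1 y1 | M1 \<Rightarrow> 1 | P2 \<Rightarrow> 1 | M2 \<Rightarrow> i2 y2)"

lemma inv_y1: "invertible_elem y1" unfolding invertible_elem_def using y1 by blast
lemma inv_y2: "invertible_elem y2" unfolding invertible_elem_def using y2 by blast

lemma cc_central: "\<forall>g. central (cc g)"
proof
  fix g show "central (cc g)"
    by (cases g) (simp_all add: cc_def central_one ra_central[OF ra1 cy1] ra_central[OF ri2 cy2])
qed

lemma cc_inv: "\<forall>g. invertible_elem (cc g)"
proof
  fix g show "invertible_elem (cc g)"
    by (cases g) (simp_all add: cc_def invertible_one ra_invertible[OF ra1 inv_y1] ra_invertible[OF ri2 inv_y2])
qed

lemmas ones = ra_one[OF ra1] ra_one[OF ra2] ra_one[OF ri1] ra_one[OF ri2]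
lemmas mults = ra_mult[OF ra1] ra_mult[OF ra2] ra_mult[OF ri1] ra_mult[OF ri2]
lemmas invs = ra_inv_l[OF ra1] ra_inv_l[OF ra2] ra_inv_r[OF ra1] ra_inv_r[OF ra2]

lemma c12: "sh1 (sh2 x) = sh2 (sh1 x)" using comm by (metis comp_apply)

lemma d1: "sh1 (i2 x) = i2 (sh1 x)"
proof -
  have "sh1 (i2 x) = i2 (sh2 (sh1 (i2 x)))" by (simp add: invs)
  also have "\<dots> = i2 (sh1 (sh2 (i2 x)))" by (simp add: c12)
  also have "\<dots> = i2 (sh1 x)" by (simp add: invs)
  finally show ?thesis .
qed

lemma k1: "kap sh1 sh2 cc [P1, M1] = sh1 y1" by (simp add: cc_def ones)
lemma k2: "kap sh1 sh2 cc [M1, P1] = i1 y1" by (simp add: cc_def ones invs)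
lemma k3: "kap sh1 sh2 cc [P2, M2] = sh2 y2" by (simp add: cc_def ones invs)
lemma k4: "kap sh1 sh2 cc [M2, P2] = i2 y2" by (simp add: cc_def ones invs)
lemma k5: "kap sh1 sh2 cc [P1, M2] = sh1 y1 * sh1 (sh1 (i2 y2))" by (simp add: cc_def ones invs)
lemma k5': "kap sh1 sh2 cc [M2, P1] = i2 y2 * i2 (i2 (sh1 y1))" by (simp add: cc_def ones invs)
lemma k6: "kap sh1 sh2 cc [M1, P2] = 1" by (simp add: cc_def ones invs)
lemma k6': "kap sh1 sh2 cc [P2, M1] = 1" by (simp add: cc_def ones invs)

lemma key0: "sh2 y1 * sh1 y2 = i1 y2 * i2 y1"
proof -
  let ?X = "sh2 y1 * sh1 y2" and ?X' = "i1 y2 * i2 y1"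
  have cen: "central (sh2 s1)" by (rule ra_central[OF ra2 cs1])
  have "?X * (sh2 s1 * sh1 s2) = sh2 y1 * (sh1 y2 * sh2 s1) * sh1 s2" by (simp add: mult.assoc)
  also have "\<dots> = sh2 y1 * (sh2 s1 * sh1 y2) * sh1 s2" using central_comm[OF cen] by simp
  also have "\<dots> = sh2 (y1 * s1) * sh1 (y2 * s2)" by (simp add: mults mult.assoc)
  also have "\<dots> = 1" by (simp add: y1 y2 ones)
  finally have XP: "?X * (sh2 s1 * sh1 s2) = 1" .
  have "(i2 s1 * i1 s2) * ?X' = i2 s1 * (i1 s2 * i1 y2) * i2 y1" by (simp add: mult.assoc)
  also have "\<dots> = i2 s1 * i2 y1" by (simp add: mults[symmetric] y2 ones)
  also have "\<dots> = 1" by (simp add: mults[symmetric] y1 ones)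
  finally have QX: "(i2 s1 * i1 s2) * ?X' = 1" .
  have "?X = ?X * ((i2 s1 * i1 s2) * ?X')" using QX by simp
  also have "\<dots> = (?X * (sh2 s1 * sh1 s2)) * ?X'" using hyp by (simp add: mult.assoc)
  also have "\<dots> = ?X'" using XP by simp
  finally show ?thesis .
qed

lemma key: "kap sh1 sh2 cc [P1, M2] = kap sh1 sh2 cc [M2, P1]"
proof -
  have t: "i1 (sh2 (kap sh1 sh2 cc [P1, M2])) = sh2 y1 * sh1 y2"
  proof -
    have "i1 (sh2 (kap sh1 sh2 cc [P1, M2])) = i1 (sh2 (sh1 y1)) * i1 (sh2 (sh1 (sh1 (i2 y2))))"
      by (simp only: k5 mults)
    also have "i1 (sh2 (sh1 y1)) = sh2 y1" by (simp add: c12[symmetric] invs)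
    also have "i1 (sh2 (sh1 (sh1 (i2 y2)))) = sh1 y2" by (simp add: c12[symmetric] invs)
    finally show ?thesis .
  qed
  have t': "i1 (sh2 (kap sh1 sh2 cc [M2, P1])) = i1 y2 * i2 y1"
  proof -
    have "i1 (sh2 (kap sh1 sh2 cc [M2, P1])) = i1 (sh2 (i2 y2)) * i1 (sh2 (i2 (i2 (sh1 y1))))"
      by (simp only: k5' mults)
    also have "i1 (sh2 (i2 y2)) = i1 y2" by (simp add: invs)
    also have "i1 (sh2 (i2 (i2 (sh1 y1)))) = i2 y1"
    proof -
      have "sh2 (i2 (i2 (sh1 y1))) = sh1 (i2 y1)" by (simp only: invs d1)
      then show ?thesis by (simp add: invs)
    qed
    finally show ?thesis .
  qed
  have "i1 (sh2 (kap sh1 sh2 cc [P1, M2])) = i1 (sh2 (kap sh1 sh2 cc [M2, P1]))"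
    using t t' key0 by simp
  then show ?thesis by (metis invs)
qed

end


context tw
begin

lemma sP: "siso (Phi sh1 sh2 cc) (free_skew sh1 sh2) (free_skew sh1 sh2)"
  by (rule siso_Phi[OF ra1 ra2 cc_central cc_inv])

lemma kinv_l: "kinv sh1 sh2 cc w * kap sh1 sh2 cc w = 1"
  using kinv_prop[OF ra1 ra2 cc_central cc_inv] by blast
lemma kinv_r: "kap sh1 sh2 cc w * kinv sh1 sh2 cc w = 1"
  using kinv_prop[OF ra1 ra2 cc_central cc_inv] by blast

lemma eq_helper: assumes "ideal I (free_skew sh1 sh2)" "Phi sh1 sh2 cc r = (\<lambda>w. kap sh1 sh2 cc ab * r' w)"
  shows "Phi sh1 sh2 cc r \<in> I \<longleftrightarrow> r' \<in> I"
  by (rule scale_equiv[OF assms kinv_l])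

lemma rel_equiv: assumes "ideal I (free_skew sh1 sh2)"
  shows "Phi sh1 sh2 cc ` tgwc_rels sh1 sh2 t1 t2 \<subseteq> I \<longleftrightarrow> tgwc_rels sh1 sh2 (s1 * t1) (s2 * t2) \<subseteq> I"
proof -
  have x1: "sh1 t1 = kap sh1 sh2 cc [P1, M1] * sh1 (s1 * t1)"
    by (simp only: k1 mults[symmetric] mult.assoc[symmetric] y1 mult_1_left)
  have x2: "i1 t1 = kap sh1 sh2 cc [M1, P1] * i1 (s1 * t1)"
    by (simp only: k2 mults[symmetric] mult.assoc[symmetric] y1 mult_1_left)
  have x3: "sh2 t2 = kap sh1 sh2 cc [P2, M2] * sh2 (s2 * t2)"
    by (simp only: k3 mults[symmetric] mult.assoc[symmetric] y2 mult_1_left)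
  have x4: "i2 t2 = kap sh1 sh2 cc [M2, P2] * i2 (s2 * t2)"
    by (simp only: k4 mults[symmetric] mult.assoc[symmetric] y2 mult_1_left)
  have e1: "Phi sh1 sh2 cc (rl P1 M1 (sh1 t1)) \<in> I \<longleftrightarrow> rl P1 M1 (sh1 (s1 * t1)) \<in> I"
    by (rule eq_helper[OF assms Phi_rl[OF x1]])
  have e2: "Phi sh1 sh2 cc (rl M1 P1 (i1 t1)) \<in> I \<longleftrightarrow> rl M1 P1 (i1 (s1 * t1)) \<in> I"
    by (rule eq_helper[OF assms Phi_rl[OF x2]])
  have e3: "Phi sh1 sh2 cc (rl P2 M2 (sh2 t2)) \<in> I \<longleftrightarrow> rl P2 M2 (sh2 (s2 * t2)) \<in> I"
    by (rule eq_helper[OF assms Phi_rl[OF x3]])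
  have e4: "Phi sh1 sh2 cc (rl M2 P2 (i2 t2)) \<in> I \<longleftrightarrow> rl M2 P2 (i2 (s2 * t2)) \<in> I"
    by (rule eq_helper[OF assms Phi_rl[OF x4]])
  have e5: "Phi sh1 sh2 cc (rc P1 M2) \<in> I \<longleftrightarrow> rc P1 M2 \<in> I"
    by (rule eq_helper[OF assms Phi_rc[OF key]]) simp
  have k66: "kap sh1 sh2 cc [M1, P2] = kap sh1 sh2 cc [P2, M1]" by (simp only: k6 k6')
  have e6: "Phi sh1 sh2 cc (rc M1 P2) \<in> I \<longleftrightarrow> rc M1 P2 \<in> I"
    by (rule eq_helper[OF assms Phi_rc[OF k66]]) simp
  show ?thesis
    unfolding rels_eq[OF ra1 ra2] image_insert image_empty insert_subset
    using e1 e2 e3 e4 e5 e6 by blast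
qed

lemma J_eq: "Phi sh1 sh2 cc ` tgwc_ideal sh1 sh2 t1 t2 = tgwc_ideal sh1 sh2 (s1 * t1) (s2 * t2)"
proof -
  have "Phi sh1 sh2 cc ` tgwc_ideal sh1 sh2 t1 t2 =
      genideal (free_skew sh1 sh2) (Phi sh1 sh2 cc ` tgwc_rels sh1 sh2 t1 t2)"
    unfolding tgwc_ideal_def by (rule siso_genideal[OF sP])
  also have "\<dots> = tgwc_ideal sh1 sh2 (s1 * t1) (s2 * t2)"
  proof -
    have "{I. ideal I (free_skew sh1 sh2) \<and> Phi sh1 sh2 cc ` tgwc_rels sh1 sh2 t1 t2 \<subseteq> I} =
        {I. ideal I (free_skew sh1 sh2) \<and> tgwc_rels sh1 sh2 (s1 * t1) (s2 * t2) \<subseteq> I}"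
      by (intro Collect_cong) (meson rel_equiv)
    then show ?thesis unfolding tgwc_ideal_def genideal_def by simp
  qed
  finally show ?thesis .
qed

lemma fc: "Phi sh1 sh2 cc ` free_comp sh1 sh2 d = free_comp sh1 sh2 d"
proof -
  have nz: "Phi sh1 sh2 cc f w = 0 \<longleftrightarrow> f w = 0" for f w
  proof
    assume "Phi sh1 sh2 cc f w = 0"
    then have "f w * kap sh1 sh2 cc w * kinv sh1 sh2 cc w = 0" unfolding Phi_def by simp
    then show "f w = 0" by (simp add: mult.assoc kinv_r)
  qed (simp add: Phi_def)
  show ?thesis
  proof
    show "Phi sh1 sh2 cc ` free_comp sh1 sh2 d \<subseteq> free_comp sh1 sh2 d"
    proof
      fix h assume "h \<in> Phi sh1 sh2 cc ` free_comp sh1 sh2 d"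
      then obtain f where f: "f \<in> free_comp sh1 sh2 d" "h = Phi sh1 sh2 cc f" by blast
      have "{w. h w \<noteq> 0} = {w. f w \<noteq> 0}" using nz f(2) by simp
      moreover have "\<And>w. h w \<noteq> 0 \<Longrightarrow> f w \<noteq> 0" using nz f(2) by simp
      ultimately show "h \<in> free_comp sh1 sh2 d" using f(1) unfolding free_comp_def free_skew_def
        by simp
    qed
    show "free_comp sh1 sh2 d \<subseteq> Phi sh1 sh2 cc ` free_comp sh1 sh2 d"
    proof
      fix f assume f: "f \<in> free_comp sh1 sh2 d"
      let ?g = "\<lambda>w. f w * kinv sh1 sh2 cc w"
      have g: "Phi sh1 sh2 cc ?g = f" unfolding Phi_def by (rule ext) (simp add: mult.assoc kinv_l)
      have gz: "?g w \<noteq> 0 \<Longrightarrow> f w \<noteq> 0" for w by auto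
      have "{w. ?g w \<noteq> 0} \<subseteq> {w. f w \<noteq> 0}" using gz by blast
      then have "?g \<in> free_comp sh1 sh2 d" using f gz unfolding free_comp_def free_skew_def
        by (auto intro: finite_subset)
      then have "Phi sh1 sh2 cc ?g \<in> Phi sh1 sh2 cc ` free_comp sh1 sh2 d" by (rule imageI)
      then show "f \<in> Phi sh1 sh2 cc ` free_comp sh1 sh2 d" by (simp only: g)
    qed
  qed
qed

lemma Phi_emb: "Phi sh1 sh2 cc (emb r) = emb r"
  unfolding Phi_def emb_def by (rule ext) simp

theorem tw_main: "\<exists>\<phi>. graded_R_ring_iso sh1 sh2 t1 t2 (s1 * t1) (s2 * t2) \<phi>"
proof -
  let ?P = "Phi sh1 sh2 cc"
  let ?t = "tgwc sh1 sh2 t1 t2" and ?t' = "tgwc sh1 sh2 (s1 * t1) (s2 * t2)"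
  have s1': "siso (image ?P) ?t ?t'"
    using siso_quot[OF sP, of "tgwc_ideal sh1 sh2 t1 t2"] unfolding tgwc_def J_eq .
  have proj: "image ?P (tgwc_proj sh1 sh2 t1 t2 f) = tgwc_proj sh1 sh2 (s1 * t1) (s2 * t2) (?P f)" for f
    unfolding tgwc_proj_def siso_coset[OF sP] J_eq ..
  have comp: "image ?P ` tgwc_comp sh1 sh2 t1 t2 d = tgwc_comp sh1 sh2 (s1 * t1) (s2 * t2) d" for d
  proof -
    have "image ?P ` tgwc_comp sh1 sh2 t1 t2 d = tgwc_proj sh1 sh2 (s1 * t1) (s2 * t2) ` ?P ` free_comp sh1 sh2 d"
      unfolding tgwc_comp_def image_image proj ..
    then show ?thesis unfolding fc tgwc_comp_def .
  qed
  have gr_eq: "tgwc_graded_ideal sh1 sh2 a b = gr (tgwc sh1 sh2 a b) (tgwc_comp sh1 sh2 a b)" for a b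
    unfolding tgwc_graded_ideal_def gr_def by (rule ext) simp
  have TA: "image ?P ` tgwa_ideal sh1 sh2 t1 t2 = tgwa_ideal sh1 sh2 (s1 * t1) (s2 * t2)"
  proof -
    have U: "image ?P ` \<Union>{I. gr ?t (tgwc_comp sh1 sh2 t1 t2) I \<and> I \<inter> tgwc_comp sh1 sh2 t1 t2 (0, 0) = {\<zero>\<^bsub>?t\<^esub>}}
      = \<Union>{I. gr ?t' (tgwc_comp sh1 sh2 (s1 * t1) (s2 * t2)) I \<and> I \<inter> tgwc_comp sh1 sh2 (s1 * t1) (s2 * t2) (0, 0) = {\<zero>\<^bsub>?t'\<^esub>}}"
      by (rule siso_family[OF s1' comp])
    show ?thesis unfolding tgwa_ideal_def gr_eq siso_genideal[OF s1'] U ..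
  qed
  have s2': "siso (image (image ?P)) (tgwa sh1 sh2 t1 t2) (tgwa sh1 sh2 (s1 * t1) (s2 * t2))"
    using siso_quot[OF s1', of "tgwa_ideal sh1 sh2 t1 t2"] unfolding tgwa_def TA .
  have proj2: "image (image ?P) (tgwa_proj sh1 sh2 t1 t2 f) = tgwa_proj sh1 sh2 (s1 * t1) (s2 * t2) (?P f)" for f
    unfolding tgwa_proj_def siso_coset[OF s1'] TA proj ..
  have "graded_R_ring_iso sh1 sh2 t1 t2 (s1 * t1) (s2 * t2) (image (image ?P))"
    unfolding graded_R_ring_iso_def
  proof (intro conjI allI)
    show "image (image ?P) \<in> ring_iso (tgwa sh1 sh2 t1 t2) (tgwa sh1 sh2 (s1 * t1) (s2 * t2))"
      by (rule siso_ring_iso[OF s2'])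
    fix r show "image (image ?P) (tgwa_emb sh1 sh2 t1 t2 r) = tgwa_emb sh1 sh2 (s1 * t1) (s2 * t2) r"
      unfolding tgwa_emb_def proj2 Phi_emb ..
  next
    fix d show "image (image ?P) ` tgwa_comp sh1 sh2 t1 t2 d = tgwa_comp sh1 sh2 (s1 * t1) (s2 * t2) d"
    proof -
      have "image (image ?P) ` tgwa_comp sh1 sh2 t1 t2 d = tgwa_proj sh1 sh2 (s1 * t1) (s2 * t2) ` ?P ` free_comp sh1 sh2 d"
        unfolding tgwa_comp_def image_image proj2 ..
      then show ?thesis unfolding fc tgwa_comp_def .
    qed
  qed
  then show ?thesis by blast
qed

end


theorem mainTheorem10:
  fixes phi :: "'k::field \<Rightarrow> 'a::ring_1"
    and sh1 sh2 :: "'a \<Rightarrow> 'a"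
    and t1 t2 s1 s2 t1' t2' :: 'a
  assumes "k_algebra_map phi"
    and "ring_aut sh1" and "ring_aut sh2"
    and "\<forall>c. sh1 (phi c) = phi c" and "\<forall>c. sh2 (phi c) = phi c"
    and "sh1 \<circ> sh2 = sh2 \<circ> sh1"
    and "central t1" and "central t2"
    and "regular_elem t1" and "regular_elem t2"
    and "sh2 t1 * sh1 t2 = Hilbert_Choice.inv sh2 t1 * Hilbert_Choice.inv sh1 t2"
    and "central s1" and "central s2"
    and "invertible_elem s1" and "invertible_elem s2"
    and "sh2 s1 * sh1 s2 = Hilbert_Choice.inv sh2 s1 * Hilbert_Choice.inv sh1 s2"
    and "t1' = s1 * t1" and "t2' = s2 * t2"
  shows "\<exists>\<phi>. graded_R_ring_iso sh1 sh2 t1 t2 t1' t2' \<phi>"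
proof -
  obtain y1 where y1: "s1 * y1 = 1" "y1 * s1 = 1" using assms(14) unfolding invertible_elem_def by blast
  obtain y2 where y2: "s2 * y2 = 1" "y2 * s2 = 1" using assms(15) unfolding invertible_elem_def by blast
  interpret tw sh1 sh2 s1 s2 y1 y2
    by (rule tw.intro[OF assms(2,3,6,12,13) y1 y2 assms(16)])
  show ?thesis using tw_main[of t1 t2] assms(17,18) by simp
qed

end
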